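(* Let $S(t,z)=\sum_\pi t^{|\pi|}z^{\mathrm{rmax}(\pi)}$ over all separable permutations, which equals (with $r=\sqrt{t^2-6t+1}$) $$S(t,z)=\frac{4\sqrt{\left(-\frac{1}{4}r-tz+\frac{t}{4}+\frac{5}{4}\right)^2+r-t-1}-r+4tz+t-3}{2(r-t-1)}.$$ Define $$E(t,z_1,z_2,z_3)=z_1z_2z_3t+\frac{(S(t,z_1)+1)(S(t,z_2)+1)(S(t,z_3)+1)\,t^2z_1^2z_2z_3}{(1-S(t,z_1)S(t,z_3))(1-S(t,z_1)S(t,z_2))},$$ $$A(z_2,z_3)=S(t,z_2)\left(z_3t+\frac{S(t,z_3)^2}{S(t,z_3)+1}\right),\qquad D=1-A(z_2,z_3)-tz_2z_3,$$ and $E=E(t,z_1,z_2,z_3)$. For an ordered triple $T=(\mathrm{stat}_1,\mathrm{stat}_2,\mathrm{stat}_3)$ write $G_T=\sum_\pi t^{|\pi|}z_1^{\mathrm{stat}_1(\pi)}z_2^{\mathrm{stat}_2(\pi)}z_3^{\mathrm{stat}_3(\pi)}$. Then: (i) for every $T\in\{(\mathrm{lmax},\mathrm{rmax},\mathrm{lmin}),(\mathrm{lmin},\mathrm{rmin},\mathrm{lmax}),(\mathrm{rmin},\mathrm{rmax},\mathrm{lmin}),(\mathrm{rmax},\mathrm{rmin},\mathrm{lmax})\}$, $G_T$ over all separable permutations equals $E/D$; (ii) for $T\in\{(\mathrm{lmax},\mathrm{rmax},\mathrm{lmin}),(\mathrm{rmin},\mathrm{rmax},\mathrm{lmin})\}$,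 $G_T$ over reducible separable permutations equals $E-z_1z_2z_3t$, and over irreducible separable permutations equals $$\frac{1}{D}\Bigl(z_1z_2z_3t+\bigl(A(z_2,z_3)+tz_2z_3\bigr)\bigl(E-z_1z_2z_3t\bigr)\Bigr);$$ (iii) for $T\in\{(\mathrm{lmin},\mathrm{rmin},\mathrm{lmax}),(\mathrm{rmax},\mathrm{rmin},\mathrm{lmax})\}$, $G_T$ over irreducible separable permutations equals $E$, and over reducible separable permutations equals $$-z_1z_2z_3t+\frac{1}{D}\Bigl(z_1z_2z_3t+\bigl(A(z_2,z_3)+tz_2z_3\bigr)\bigl(E-z_1z_2z_3t\bigr)\Bigr).$$
   Context: A permutation of length $n$ is a word $\pi=\pi_1\cdots\pi_n$ containing each element of $[n]$ exactly once; $|\pi|=n$. For $\pi$ of length $m$, $\sigma$ of length $n$: $\pi\oplus\sigma=\pi_1\cdots\pi_m(\sigma_1+m)\cdots(\sigma_n+m)$, $\pi\ominus\sigma=(\pi_1+n)\cdots(\pi_m+n)\sigma_1\cdots\sigma_n$. Separable permutations are those of length $\ge1$ obtained from $1$ by repeatedly applying $\oplus,\ominus$ (equivalently, avoiding $2413$ and $3142$). The permutation $1$ is irreducible; a permutation of length $n\ge2$ is irreducible if there is no $i$, $2\le i\le n$, such that every element of $\pi_1\cdots\pi_{i-1}$ is less than every element of $\pi_i\cdots\pi_n$; reducible means not irreducible (length $\ge2$). $\pi_i$ is a left-to-right maximum (minimum) if $\pi_i>\pi_j$ ($\pi_i<\pi_j$) for all $j<i$, a right-to-left maximum (minimum) if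 $\pi_i>\pi_j$ ($\pi_i<\pi_j$) for all $j>i$; $\mathrm{lmax},\mathrm{lmin},\mathrm{rmax},\mathrm{rmin}$ count these. Square roots are the branches giving formal power series in $t$. *)

theory Defs
  imports Complex_Main "HOL-Computational_Algebra.Formal_Power_Series"
begin

(* Permutations are lists of naturals; a permutation of length n is a list
   containing each of 1..n exactly once.  Positions are 0-indexed in lists. *)

definition psum :: "nat list \<Rightarrow> nat list \<Rightarrow> nat list" where
  "psum p q = p @ map (\<lambda>x. x + length p) q"

definition pskew :: "nat list \<Rightarrow> nat list \<Rightarrow> nat list" where
  "pskew p q = map (\<lambda>x. x + length q) p @ q"

inductive separable :: "nat list \<Rightarrow> bool" where
  one: "separable [1]"
| plus: "separable p \<Longrightarrow> separable q \<Longrightarrow> separable (psum p q)"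
| minus: "separable p \<Longrightarrow> separable q \<Longrightarrow> separable (pskew p q)"

definition irreducible_perm :: "nat list \<Rightarrow> bool" where
  "irreducible_perm p \<longleftrightarrow> p = [1] \<or>
     (length p \<ge> 2 \<and> \<not> (\<exists>i\<in>{2..length p}.
        \<forall>a\<in>set (take (i - 1) p). \<forall>b\<in>set (drop (i - 1) p). a < b))"

definition reducible_perm :: "nat list \<Rightarrow> bool" where
  "reducible_perm p \<longleftrightarrow> length p \<ge> 2 \<and> \<not> irreducible_perm p"

definition lmax :: "nat list \<Rightarrow> nat" where
  "lmax p = card {i. i < length p \<and> (\<forall>j<i. p ! i > p ! j)}"
definition lmin :: "nat list \<Rightarrow> nat" where
  "lmin p = card {i. i < length p \<and> (\<forall>j<i. p ! i < p ! j)}"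
definition rmax :: "nat list \<Rightarrow> nat" where
  "rmax p = card {i. i < length p \<and> (\<forall>j. i < j \<and> j < length p \<longrightarrow> p ! i > p ! j)}"
definition rmin :: "nat list \<Rightarrow> nat" where
  "rmin p = card {i. i < length p \<and> (\<forall>j. i < j \<and> j < length p \<longrightarrow> p ! i < p ! j)}"

(* trivariate generating function over the permutations satisfying P,
   as a formal power series in t with the z_i specialised to complex numbers *)
definition GF :: "(nat list \<Rightarrow> bool) \<Rightarrow> (nat list \<Rightarrow> nat) \<times> (nat list \<Rightarrow> nat) \<times> (nat list \<Rightarrow> nat)
    \<Rightarrow> complex \<Rightarrow> complex \<Rightarrow> complex \<Rightarrow> complex fps" where
  "GF P T z1 z2 z3 = (case T of (s1, s2, s3) \<Rightarrow>
     Abs_fps (\<lambda>n. \<Sum>p\<in>{p. P p \<and> length p = n}. z1 ^ s1 p * z2 ^ s2 p * z3 ^ s3 p))"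

definition Sgf :: "complex \<Rightarrow> complex fps" where
  "Sgf z = Abs_fps (\<lambda>n. \<Sum>p\<in>{p. separable p \<and> length p = n}. z ^ rmax p)"

(* formal square root: the branch with constant term csqrt (a$0) (here always 1) *)
definition fsqrt :: "complex fps \<Rightarrow> complex fps" where
  "fsqrt a = fps_radical (\<lambda>_ x. csqrt x) 2 a"

definition Sclosed :: "complex \<Rightarrow> complex fps" where
  "Sclosed z = (let t = fps_X; r = fsqrt (t^2 - 6 * t + 1) in
     (4 * fsqrt ((- r / 4 - t * fps_const z + t / 4 + 5 / 4)^2 + r - t - 1)
        - r + 4 * t * fps_const z + t - 3) / (2 * (r - t - 1)))"

definition Egf :: "complex \<Rightarrow> complex \<Rightarrow> complex \<Rightarrow> complex fps" where
  "Egf z1 z2 z3 = (let t = fps_X in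
     fps_const (z1 * z2 * z3) * t +
     (Sgf z1 + 1) * (Sgf z2 + 1) * (Sgf z3 + 1) * t^2 * fps_const (z1^2 * z2 * z3)
       / ((1 - Sgf z1 * Sgf z3) * (1 - Sgf z1 * Sgf z2)))"

definition Agf :: "complex \<Rightarrow> complex \<Rightarrow> complex fps" where
  "Agf z2 z3 = Sgf z2 * (fps_const z3 * fps_X + (Sgf z3)^2 / (Sgf z3 + 1))"

definition Dgf :: "complex \<Rightarrow> complex \<Rightarrow> complex fps" where
  "Dgf z2 z3 = 1 - Agf z2 z3 - fps_X * fps_const (z2 * z3)"

end

theory Submission
  imports Defs
begin

unbundle fps_syntax


definition vals :: "nat list \<Rightarrow> bool" where
  "vals p \<longleftrightarrow> (\<forall>x\<in>set p. 0 < x \<and> x \<le> length p)"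

lemma psum_len[simp]: "length (psum a b) = length a + length b"
  by (simp add: psum_def)
lemma pskew_len[simp]: "length (pskew a b) = length a + length b"
  by (simp add: pskew_def)

lemma sep_vals: "separable p \<Longrightarrow> vals p \<and> p \<noteq> []"
proof (induction rule: separable.induct)
  case one then show ?case by (simp add: vals_def)
next
  case (plus p q) then show ?case by (fastforce simp: vals_def psum_def)
next
  case (minus p q) then show ?case by (fastforce simp: vals_def pskew_def)
qed

lemma sep_fin: "finite {p. separable p \<and> length p = n}"
proof (rule finite_subset)
  show "{p. separable p \<and> length p = n} \<subseteq> {xs. set xs \<subseteq> {1..n} \<and> length xs = n}"
    using sep_vals by (fastforce simp: vals_def)
  show "finite {xs. set xs \<subseteq> {1..n} \<and> length xs = n}"
    by (rule finite_lists_length_eq) simp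
qed

lemma psum_nth1: "i < length a \<Longrightarrow> psum a b ! i = a ! i"
  by (simp add: psum_def nth_append)
lemma psum_nth2: "j < length b \<Longrightarrow> psum a b ! (length a + j) = b ! j + length a"
  by (simp add: psum_def nth_append)
lemma pskew_nth1: "i < length a \<Longrightarrow> pskew a b ! i = a ! i + length b"
  by (simp add: pskew_def nth_append)
lemma pskew_nth2: "j < length b \<Longrightarrow> pskew a b ! (length a + j) = b ! j"
  by (simp add: pskew_def nth_append)

lemma card_split:
  "card {i. i < (m::nat) + n \<and> P i} = card {i. i < m \<and> P i} + card {j. j < n \<and> P (m + j)}"
proof -
  have e: "{i. i < m + n \<and> P i} = {i. i < m \<and> P i} \<union> (\<lambda>j. m + j) ` {j. j < n \<and> P (m + j)}"
    by (auto simp: image_iff) (metis add_diff_inverse_nat add_less_cancel_left)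
  have "card ({i. i < m \<and> P i} \<union> (\<lambda>j. m + j) ` {j. j < n \<and> P (m + j)})
      = card {i. i < m \<and> P i} + card ((\<lambda>j. m + j) ` {j. j < n \<and> P (m + j)})"
    by (rule card_Un_disjoint) auto
  also have "card ((\<lambda>j. m + j) ` {j. j < n \<and> P (m + j)}) = card {j. j < n \<and> P (m + j)}"
    by (rule card_image) (simp add: inj_on_def)
  finally show ?thesis using e by simp
qed

lemma all_less_add: "(\<forall>k < (m::nat) + j. P k) \<longleftrightarrow> (\<forall>k<m. P k) \<and> (\<forall>k<j. P (m + k))"
  by (auto) (metis add_diff_inverse_nat nat_add_left_cancel_less)

lemma all_gt_lo: "(i::nat) < m \<Longrightarrow> (\<forall>j. i < j \<and> j < m + n \<longrightarrow> P j) \<longleftrightarrow>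
   (\<forall>j. i < j \<and> j < m \<longrightarrow> P j) \<and> (\<forall>j<n. P (m + j))"
  by (auto) (metis add_diff_inverse_nat nat_add_left_cancel_less)

lemma all_gt_hi: "(\<forall>j. (m::nat) + i < j \<and> j < m + n \<longrightarrow> P j) \<longleftrightarrow>
   (\<forall>j. i < j \<and> j < n \<longrightarrow> P (m + j))"
proof
  assume H: "\<forall>j. m + i < j \<and> j < m + n \<longrightarrow> P j"
  show "\<forall>j. i < j \<and> j < n \<longrightarrow> P (m + j)"
  proof (intro allI impI)
    fix j assume "i < j \<and> j < n"
    then have "m + i < m + j \<and> m + j < m + n" by simp
    then show "P (m + j)" using H by blast
  qed
next
  assume H: "\<forall>j. i < j \<and> j < n \<longrightarrow> P (m + j)"
  show "\<forall>j. m + i < j \<and> j < m + n \<longrightarrow> P j"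
  proof (intro allI impI)
    fix j assume j: "m + i < j \<and> j < m + n"
    then have "i < j - m \<and> j - m < n" by auto
    then have "P (m + (j - m))" using H by blast
    then show "P j" using j by simp
  qed
qed

lemma vals_nth: "vals a \<Longrightarrow> k < length a \<Longrightarrow> 0 < a ! k \<and> a ! k \<le> length a"
  unfolding vals_def using nth_mem by blast

lemma lt_shift: "vals a \<Longrightarrow> k < length a \<Longrightarrow> 0 < c \<Longrightarrow> a ! k < c + length a"
  using vals_nth[of a k] by linarith

lemma lmax_psum: assumes va: "vals a" and vb: "vals b" shows "lmax (psum a b) = lmax a + lmax b"
proof -
  let ?p = "psum a b"
  have "lmax ?p = card {i. i < length a \<and> (\<forall>j<i. ?p ! j < ?p ! i)}
     + card {j. j < length b \<and> (\<forall>k<length a + j. ?p ! k < ?p ! (length a + j))}"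
    unfolding lmax_def psum_len by (rule card_split)
  also have "{i. i < length a \<and> (\<forall>j<i. ?p ! j < ?p ! i)} = {i. i < length a \<and> (\<forall>j<i. a ! j < a ! i)}"
    by (auto simp: psum_nth1)
  also have "{j. j < length b \<and> (\<forall>k<length a + j. ?p ! k < ?p ! (length a + j))}
      = {j. j < length b \<and> (\<forall>k<j. b ! k < b ! j)}"
  proof (intro Collect_cong conj_cong refl)
    fix j assume j: "j < length b"
    have "\<forall>k<length a. ?p ! k < ?p ! (length a + j)"
      using j vals_nth[OF vb j] by (auto simp: psum_nth1 psum_nth2 intro: lt_shift[OF va])
    then show "(\<forall>k<length a + j. ?p ! k < ?p ! (length a + j)) = (\<forall>k<j. b ! k < b ! j)"
      using j by (auto simp: all_less_add psum_nth2)
  qed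
  finally show ?thesis by (simp add: lmax_def)
qed

lemma lmin_psum: assumes va: "vals a" and vb: "vals b" and ne: "a \<noteq> []" shows "lmin (psum a b) = lmin a"
proof -
  let ?p = "psum a b"
  have "lmin ?p = card {i. i < length a \<and> (\<forall>j<i. ?p ! i < ?p ! j)}
     + card {j. j < length b \<and> (\<forall>k<length a + j. ?p ! (length a + j) < ?p ! k)}"
    unfolding lmin_def psum_len by (rule card_split)
  also have "{i. i < length a \<and> (\<forall>j<i. ?p ! i < ?p ! j)} = {i. i < length a \<and> (\<forall>j<i. a ! i < a ! j)}"
    by (auto simp: psum_nth1)
  also have "{j. j < length b \<and> (\<forall>k<length a + j. ?p ! (length a + j) < ?p ! k)} = {}"
  proof -
    { fix j assume j: "j < length b" and H: "\<forall>k<length a + j. ?p ! (length a + j) < ?p ! k"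
      have a0: "0 < length a" using ne by simp
      have "?p ! (length a + j) < ?p ! 0" using H a0 by auto
      moreover have "?p ! 0 < ?p ! (length a + j)"
        using j a0 vals_nth[OF va a0] vals_nth[OF vb j] by (simp add: psum_nth1 psum_nth2)
      ultimately have False by simp }
    then show ?thesis by blast
  qed
  finally show ?thesis by (simp add: lmin_def)
qed

lemma psum_nth0: "b \<noteq> [] \<Longrightarrow> psum a b ! length a = b ! 0 + length a"
  using psum_nth2[of 0 b a] by simp
lemma pskew_nth0: "b \<noteq> [] \<Longrightarrow> pskew a b ! length a = b ! 0"
  using pskew_nth2[of 0 b a] by simp

lemma rmax_psum: assumes va: "vals a" and vb: "vals b" and ne: "b \<noteq> []" shows "rmax (psum a b) = rmax b"
proof -
  let ?p = "psum a b"
  have "rmax ?p = card {i. i < length a \<and> (\<forall>j. i < j \<and> j < length a + length b \<longrightarrow> ?p ! j < ?p ! i)}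
     + card {j. j < length b \<and> (\<forall>k. length a + j < k \<and> k < length a + length b \<longrightarrow> ?p ! k < ?p ! (length a + j))}"
    unfolding rmax_def psum_len by (rule card_split)
  also have "{i. i < length a \<and> (\<forall>j. i < j \<and> j < length a + length b \<longrightarrow> ?p ! j < ?p ! i)} = {}"
  proof -
    { fix i assume i: "i < length a" and H: "\<forall>j. i < j \<and> j < length a + length b \<longrightarrow> ?p ! j < ?p ! i"
      have b0: "0 < length b" using ne by simp
      have "?p ! length a < ?p ! i" using H b0 i by auto
      moreover have "a ! i < b ! 0 + length a" using i b0 vals_nth[OF vb b0] lt_shift[OF va] by simp
      then have "?p ! i < ?p ! length a"
        using i by (simp add: psum_nth1 psum_nth0[OF ne])
      ultimately have False by simp }
    then show ?thesis by blast
  qed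
  also have "{j. j < length b \<and> (\<forall>k. length a + j < k \<and> k < length a + length b \<longrightarrow> ?p ! k < ?p ! (length a + j))}
     = {j. j < length b \<and> (\<forall>k. j < k \<and> k < length b \<longrightarrow> b ! k < b ! j)}"
  proof (intro Collect_cong conj_cong refl)
    fix j assume j: "j < length b"
    show "(\<forall>k. length a + j < k \<and> k < length a + length b \<longrightarrow> ?p ! k < ?p ! (length a + j)) =
      (\<forall>k. j < k \<and> k < length b \<longrightarrow> b ! k < b ! j)"
      unfolding all_gt_hi using j by (auto simp: psum_nth2)
  qed
  finally show ?thesis by (simp add: rmax_def)
qed

lemma rmin_psum: assumes va: "vals a" and vb: "vals b" shows "rmin (psum a b) = rmin a + rmin b"
proof -
  let ?p = "psum a b"
  have "rmin ?p = card {i. i < length a \<and> (\<forall>j. i < j \<and> j < length a + length b \<longrightarrow> ?p ! i < ?p ! j)}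
     + card {j. j < length b \<and> (\<forall>k. length a + j < k \<and> k < length a + length b \<longrightarrow> ?p ! (length a + j) < ?p ! k)}"
    unfolding rmin_def psum_len by (rule card_split)
  also have "{i. i < length a \<and> (\<forall>j. i < j \<and> j < length a + length b \<longrightarrow> ?p ! i < ?p ! j)}
      = {i. i < length a \<and> (\<forall>j. i < j \<and> j < length a \<longrightarrow> a ! i < a ! j)}"
  proof (intro Collect_cong conj_cong refl)
    fix i assume i: "i < length a"
    have "\<forall>j<length b. ?p ! i < ?p ! (length a + j)"
      using i vals_nth[OF vb] by (auto simp: psum_nth1 psum_nth2 intro: lt_shift[OF va])
    moreover have "(\<forall>j. i < j \<and> j < length a \<longrightarrow> ?p ! i < ?p ! j) = (\<forall>j. i < j \<and> j < length a \<longrightarrow> a ! i < a ! j)"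
      using i by (auto simp: psum_nth1)
    ultimately show "(\<forall>j. i < j \<and> j < length a + length b \<longrightarrow> ?p ! i < ?p ! j) = (\<forall>j. i < j \<and> j < length a \<longrightarrow> a ! i < a ! j)"
      unfolding all_gt_lo[OF i] by blast
  qed
  also have "{j. j < length b \<and> (\<forall>k. length a + j < k \<and> k < length a + length b \<longrightarrow> ?p ! (length a + j) < ?p ! k)}
     = {j. j < length b \<and> (\<forall>k. j < k \<and> k < length b \<longrightarrow> b ! j < b ! k)}"
  proof (intro Collect_cong conj_cong refl)
    fix j assume j: "j < length b"
    show "(\<forall>k. length a + j < k \<and> k < length a + length b \<longrightarrow> ?p ! (length a + j) < ?p ! k) =
      (\<forall>k. j < k \<and> k < length b \<longrightarrow> b ! j < b ! k)"
      unfolding all_gt_hi using j by (auto simp: psum_nth2)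
  qed
  finally show ?thesis by (simp add: rmin_def)
qed

lemma lmax_pskew: assumes va: "vals a" and vb: "vals b" and ne: "a \<noteq> []" shows "lmax (pskew a b) = lmax a"
proof -
  let ?p = "pskew a b"
  have "lmax ?p = card {i. i < length a \<and> (\<forall>j<i. ?p ! j < ?p ! i)}
     + card {j. j < length b \<and> (\<forall>k<length a + j. ?p ! k < ?p ! (length a + j))}"
    unfolding lmax_def pskew_len by (rule card_split)
  also have "{i. i < length a \<and> (\<forall>j<i. ?p ! j < ?p ! i)} = {i. i < length a \<and> (\<forall>j<i. a ! j < a ! i)}"
    by (auto simp: pskew_nth1)
  also have "{j. j < length b \<and> (\<forall>k<length a + j. ?p ! k < ?p ! (length a + j))} = {}"
  proof -
    { fix j assume j: "j < length b" and H: "\<forall>k<length a + j. ?p ! k < ?p ! (length a + j)"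
      have a0: "0 < length a" using ne by simp
      have "?p ! 0 < ?p ! (length a + j)" using H a0 by auto
      moreover have "b ! j < a ! 0 + length b" using lt_shift[OF vb j] vals_nth[OF va a0] by simp
      then have "?p ! (length a + j) < ?p ! 0"
        using j a0 by (simp add: pskew_nth1 pskew_nth2)
      ultimately have False by simp }
    then show ?thesis by blast
  qed
  finally show ?thesis by (simp add: lmax_def)
qed

lemma lmin_pskew: assumes va: "vals a" and vb: "vals b" shows "lmin (pskew a b) = lmin a + lmin b"
proof -
  let ?p = "pskew a b"
  have "lmin ?p = card {i. i < length a \<and> (\<forall>j<i. ?p ! i < ?p ! j)}
     + card {j. j < length b \<and> (\<forall>k<length a + j. ?p ! (length a + j) < ?p ! k)}"
    unfolding lmin_def pskew_len by (rule card_split)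
  also have "{i. i < length a \<and> (\<forall>j<i. ?p ! i < ?p ! j)} = {i. i < length a \<and> (\<forall>j<i. a ! i < a ! j)}"
    by (auto simp: pskew_nth1)
  also have "{j. j < length b \<and> (\<forall>k<length a + j. ?p ! (length a + j) < ?p ! k)}
      = {j. j < length b \<and> (\<forall>k<j. b ! j < b ! k)}"
  proof (intro Collect_cong conj_cong refl)
    fix j assume j: "j < length b"
    have "\<forall>k<length a. ?p ! (length a + j) < ?p ! k"
      using j vals_nth[OF va] lt_shift[OF vb j] by (auto simp: pskew_nth1 pskew_nth2)
    then show "(\<forall>k<length a + j. ?p ! (length a + j) < ?p ! k) = (\<forall>k<j. b ! j < b ! k)"
      unfolding all_less_add using j by (auto simp: pskew_nth2)
  qed
  finally show ?thesis by (simp add: lmin_def)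
qed

lemma rmax_pskew: assumes va: "vals a" and vb: "vals b" shows "rmax (pskew a b) = rmax a + rmax b"
proof -
  let ?p = "pskew a b"
  have "rmax ?p = card {i. i < length a \<and> (\<forall>j. i < j \<and> j < length a + length b \<longrightarrow> ?p ! j < ?p ! i)}
     + card {j. j < length b \<and> (\<forall>k. length a + j < k \<and> k < length a + length b \<longrightarrow> ?p ! k < ?p ! (length a + j))}"
    unfolding rmax_def pskew_len by (rule card_split)
  also have "{i. i < length a \<and> (\<forall>j. i < j \<and> j < length a + length b \<longrightarrow> ?p ! j < ?p ! i)}
      = {i. i < length a \<and> (\<forall>j. i < j \<and> j < length a \<longrightarrow> a ! j < a ! i)}"
  proof (intro Collect_cong conj_cong refl)
    fix i assume i: "i < length a"
    have "\<forall>j<length b. ?p ! (length a + j) < ?p ! i"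
      using i vals_nth[OF va i] lt_shift[OF vb] by (auto simp: pskew_nth1 pskew_nth2)
    moreover have "(\<forall>j. i < j \<and> j < length a \<longrightarrow> ?p ! j < ?p ! i) = (\<forall>j. i < j \<and> j < length a \<longrightarrow> a ! j < a ! i)"
      using i by (auto simp: pskew_nth1)
    ultimately show "(\<forall>j. i < j \<and> j < length a + length b \<longrightarrow> ?p ! j < ?p ! i) = (\<forall>j. i < j \<and> j < length a \<longrightarrow> a ! j < a ! i)"
      unfolding all_gt_lo[OF i] by blast
  qed
  also have "{j. j < length b \<and> (\<forall>k. length a + j < k \<and> k < length a + length b \<longrightarrow> ?p ! k < ?p ! (length a + j))}
     = {j. j < length b \<and> (\<forall>k. j < k \<and> k < length b \<longrightarrow> b ! k < b ! j)}"
  proof (intro Collect_cong conj_cong refl)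
    fix j assume j: "j < length b"
    show "(\<forall>k. length a + j < k \<and> k < length a + length b \<longrightarrow> ?p ! k < ?p ! (length a + j)) =
      (\<forall>k. j < k \<and> k < length b \<longrightarrow> b ! k < b ! j)"
      unfolding all_gt_hi using j by (auto simp: pskew_nth2)
  qed
  finally show ?thesis by (simp add: rmax_def)
qed

lemma rmin_pskew: assumes va: "vals a" and vb: "vals b" and ne: "b \<noteq> []" shows "rmin (pskew a b) = rmin b"
proof -
  let ?p = "pskew a b"
  have "rmin ?p = card {i. i < length a \<and> (\<forall>j. i < j \<and> j < length a + length b \<longrightarrow> ?p ! i < ?p ! j)}
     + card {j. j < length b \<and> (\<forall>k. length a + j < k \<and> k < length a + length b \<longrightarrow> ?p ! (length a + j) < ?p ! k)}"
    unfolding rmin_def pskew_len by (rule card_split)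
  also have "{i. i < length a \<and> (\<forall>j. i < j \<and> j < length a + length b \<longrightarrow> ?p ! i < ?p ! j)} = {}"
  proof -
    { fix i assume i: "i < length a" and H: "\<forall>j. i < j \<and> j < length a + length b \<longrightarrow> ?p ! i < ?p ! j"
      have b0: "0 < length b" using ne by simp
      have "?p ! i < ?p ! length a" using H b0 i by auto
      moreover have "b ! 0 < a ! i + length b" using lt_shift[OF vb b0] vals_nth[OF va i] by simp
      then have "?p ! length a < ?p ! i"
        using i by (simp add: pskew_nth1 pskew_nth0[OF ne])
      ultimately have False by simp }
    then show ?thesis by blast
  qed
  also have "{j. j < length b \<and> (\<forall>k. length a + j < k \<and> k < length a + length b \<longrightarrow> ?p ! (length a + j) < ?p ! k)}
     = {j. j < length b \<and> (\<forall>k. j < k \<and> k < length b \<longrightarrow> b ! j < b ! k)}"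
  proof (intro Collect_cong conj_cong refl)
    fix j assume j: "j < length b"
    show "(\<forall>k. length a + j < k \<and> k < length a + length b \<longrightarrow> ?p ! (length a + j) < ?p ! k) =
      (\<forall>k. j < k \<and> k < length b \<longrightarrow> b ! j < b ! k)"
      unfolding all_gt_hi using j by (auto simp: pskew_nth2)
  qed
  finally show ?thesis by (simp add: rmin_def)
qed




definition splits :: "nat list \<Rightarrow> nat \<Rightarrow> bool" where
  "splits p k \<longleftrightarrow> (\<forall>x\<in>set (take k p). \<forall>y\<in>set (drop k p). x < y)"
definition ssplits :: "nat list \<Rightarrow> nat \<Rightarrow> bool" where
  "ssplits p k \<longleftrightarrow> (\<forall>x\<in>set (take k p). \<forall>y\<in>set (drop k p). y < x)"

lemma reducible_iff: "reducible_perm p \<longleftrightarrow> 2 \<le> length p \<and> (\<exists>k. 0 < k \<and> k < length p \<and> splits p k)"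
proof -
  have e: "(\<exists>i\<in>{2..length p}. splits p (i - 1)) \<longleftrightarrow> (\<exists>k. 0 < k \<and> k < length p \<and> splits p k)"
  proof
    assume "\<exists>i\<in>{2..length p}. splits p (i - 1)"
    then obtain i where "i \<in> {2..length p}" "splits p (i - 1)" by blast
    then show "\<exists>k. 0 < k \<and> k < length p \<and> splits p k" by (intro exI[of _ "i - 1"]) auto
  next
    assume "\<exists>k. 0 < k \<and> k < length p \<and> splits p k"
    then obtain k where "0 < k" "k < length p" "splits p k" by blast
    then show "\<exists>i\<in>{2..length p}. splits p (i - 1)" by (intro bexI[of _ "k + 1"]) auto
  qed
  have "reducible_perm p \<longleftrightarrow> 2 \<le> length p \<and> (\<exists>i\<in>{2..length p}. splits p (i - 1))"
    unfolding reducible_perm_def irreducible_perm_def splits_def by auto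
  then show ?thesis using e by simp
qed

lemma take_psum: "take (length a) (psum a b) = a" by (simp add: psum_def)
lemma drop_psum: "drop (length a) (psum a b) = map (\<lambda>x. x + length a) b" by (simp add: psum_def)
lemma take_pskew: "take (length a) (pskew a b) = map (\<lambda>x. x + length b) a" by (simp add: pskew_def)
lemma drop_pskew: "drop (length a) (pskew a b) = b" by (simp add: pskew_def)

lemma psum_splits: "vals a \<Longrightarrow> vals b \<Longrightarrow> splits (psum a b) (length a)"
  unfolding splits_def take_psum drop_psum vals_def by fastforce
lemma pskew_ssplits: "vals a \<Longrightarrow> vals b \<Longrightarrow> ssplits (pskew a b) (length a)"
  unfolding ssplits_def take_pskew drop_pskew vals_def by fastforce

lemma first_in_take: "0 < k \<Longrightarrow> k < length p \<Longrightarrow> p ! 0 \<in> set (take k p)"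
  by (metis length_take min.absorb4 nth_mem nth_take)
lemma last_in_drop: "k < length p \<Longrightarrow> p ! (length p - 1) \<in> set (drop k p)"
proof -
  assume k: "k < length p"
  have "drop k p ! (length p - 1 - k) = p ! (length p - 1)" using k by simp
  moreover have "length p - 1 - k < length (drop k p)" using k by simp
  ultimately show ?thesis by (metis nth_mem)
qed

lemma splits_fl: "splits p k \<Longrightarrow> 0 < k \<Longrightarrow> k < length p \<Longrightarrow> p ! 0 < p ! (length p - 1)"
  unfolding splits_def using first_in_take last_in_drop by blast
lemma ssplits_fl: "ssplits p k \<Longrightarrow> 0 < k \<Longrightarrow> k < length p \<Longrightarrow> p ! (length p - 1) < p ! 0"
  unfolding ssplits_def using first_in_take last_in_drop by blast

definition Pc :: "nat list \<Rightarrow> bool" where "Pc p \<longleftrightarrow> separable p \<and> reducible_perm p"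
definition Mc :: "nat list \<Rightarrow> bool" where
  "Mc p \<longleftrightarrow> separable p \<and> 2 \<le> length p \<and> (\<exists>k. 0 < k \<and> k < length p \<and> ssplits p k)"
definition Ipc :: "nat list \<Rightarrow> bool" where "Ipc p \<longleftrightarrow> separable p \<and> \<not> reducible_perm p"
definition Imc :: "nat list \<Rightarrow> bool" where "Imc p \<longleftrightarrow> separable p \<and> \<not> Mc p"

lemma not_Pc_Mc: "\<not> (Pc p \<and> Mc p)"
proof
  assume "Pc p \<and> Mc p"
  then obtain k k' where "0 < k" "k < length p" "splits p k" "0 < k'" "k' < length p" "ssplits p k'"
    unfolding Pc_def Mc_def reducible_iff by blast
  then show False using splits_fl ssplits_fl by fastforce
qed

lemma sep_len1: "separable p \<Longrightarrow> length p = 1 \<Longrightarrow> p = [1]"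
proof -
  assume s: "separable p" and l: "length p = 1"
  then obtain x where p: "p = [x]" by (metis One_nat_def length_0_conv length_Suc_conv)
  then show ?thesis using sep_vals[OF s] unfolding vals_def by auto
qed

lemma Pc_psum: "separable a \<Longrightarrow> separable b \<Longrightarrow> Pc (psum a b)"
proof -
  assume a: "separable a" and b: "separable b"
  then have "vals a" "vals b" "0 < length a" "0 < length b" using sep_vals by auto
  moreover have "2 \<le> length (psum a b)" using calculation(3,4) by (simp only: psum_len)
  ultimately show ?thesis unfolding Pc_def reducible_iff
    using separable.plus[OF a b] psum_splits[of a b]
    by (intro conjI exI[of _ "length a"]) (auto simp: Suc_le_eq)
qed

lemma Mc_pskew: "separable a \<Longrightarrow> separable b \<Longrightarrow> Mc (pskew a b)"
proof -
  assume a: "separable a" and b: "separable b"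
  then have "vals a" "vals b" "0 < length a" "0 < length b" using sep_vals by auto
  moreover have "2 \<le> length (pskew a b)" using calculation(3,4) by (simp only: pskew_len)
  ultimately show ?thesis unfolding Mc_def
    using separable.minus[OF a b] pskew_ssplits[of a b]
    by (intro conjI exI[of _ "length a"]) (auto simp: Suc_le_eq)
qed

lemma sep_tri: "separable p \<Longrightarrow> p = [1] \<or> Pc p \<or> Mc p"
  by (induction rule: separable.cases) (auto intro: Pc_psum Mc_pskew)

lemma one_not: "\<not> Pc [1]" "\<not> Mc [1]"
  by (auto simp: Pc_def Mc_def reducible_perm_def)

lemma psum_assoc: "psum (psum a b) c = psum a (psum b c)" by (simp add: psum_def add.assoc)
lemma pskew_assoc: "pskew (pskew a b) c = pskew a (pskew b c)" by (simp add: pskew_def add.assoc)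

lemma Pc_decomp: "Pc p \<Longrightarrow> \<exists>a b. Ipc a \<and> separable b \<and> p = psum a b"
proof (induction "length p" arbitrary: p rule: less_induct)
  case less
  have sp: "separable p" and rp: "reducible_perm p" using less.prems by (auto simp: Pc_def)
  from sp show ?case
  proof cases
    case one then show ?thesis using rp by (simp add: reducible_perm_def)
  next
    case (plus a1 b1)
    show ?thesis
    proof (cases "reducible_perm a1")
      case False then show ?thesis using plus by (auto simp: Ipc_def)
    next
      case True
      have "b1 \<noteq> []" using plus sep_vals by auto
      then have "length a1 < length p" using plus by simp
      then obtain a' b' where h: "Ipc a'" "separable b'" "a1 = psum a' b'"
        using less.hyps[of a1] True plus by (auto simp: Pc_def)
      then show ?thesis using plus psum_assoc separable.plus by metis
    qed
  next
    case (minus a1 b1)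
    then have "Mc p" using Mc_pskew by simp
    then show ?thesis using not_Pc_Mc less.prems by blast
  qed
qed

lemma Mc_decomp: "Mc p \<Longrightarrow> \<exists>a b. Imc a \<and> separable b \<and> p = pskew a b"
proof (induction "length p" arbitrary: p rule: less_induct)
  case less
  have sp: "separable p" using less.prems by (auto simp: Mc_def)
  from sp show ?case
  proof cases
    case one then show ?thesis using less.prems one_not by simp
  next
    case (minus a1 b1)
    show ?thesis
    proof (cases "Mc a1")
      case False then show ?thesis using minus by (auto simp: Imc_def)
    next
      case True
      have "b1 \<noteq> []" using minus sep_vals by auto
      then have "length a1 < length p" using minus by simp
      then obtain a' b' where h: "Imc a'" "separable b'" "a1 = pskew a' b'"
        using less.hyps[of a1] True minus by auto
      then show ?thesis using minus pskew_assoc separable.minus by metis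
    qed
  next
    case (plus a1 b1)
    then have "Pc p" using Pc_psum by simp
    then show ?thesis using not_Pc_Mc less.prems by blast
  qed
qed

lemma psum_inj_aux:
  assumes a: "Ipc a" and a': "Ipc a'" and b: "separable b" and b': "separable b'"
    and e: "psum a b = psum a' b'" and l: "length a < length a'"
  shows False
proof -
  let ?p = "psum a b"
  have va: "vals a" "a \<noteq> []" "vals b" using a b sep_vals by (auto simp: Ipc_def)
  have ta: "take (length a') ?p = a'" using e take_psum by metis
  have t1: "take (length a) a' = a"
    using ta l by (metis min.absorb1 less_imp_le take_psum take_take)
  have "set (drop (length a) a') \<subseteq> set (drop (length a) ?p)"
    using ta by (metis drop_take set_take_subset)
  then have d1: "set (drop (length a) a') \<subseteq> set (map (\<lambda>x. x + length a) b)"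
    by (simp add: drop_psum)
  have "splits a' (length a)"
    unfolding splits_def t1
  proof (intro ballI)
    fix x y assume x: "x \<in> set a" and y: "y \<in> set (drop (length a) a')"
    then obtain z where "z \<in> set b" "y = z + length a" using d1 by auto
    then show "x < y" using x va unfolding vals_def by fastforce
  qed
  moreover have "0 < length a" using va by simp
  moreover have "2 \<le> length a'" using calculation l by linarith
  ultimately have "reducible_perm a'" unfolding reducible_iff using l
    by (intro conjI exI[of _ "length a"]) auto
  then show False using a' by (simp add: Ipc_def)
qed

lemma psum_inj:
  assumes "Ipc a" "Ipc a'" "separable b" "separable b'" and e: "psum a b = psum a' b'"
  shows "a = a' \<and> b = b'"
proof -
  have l: "length a = length a'"
    using psum_inj_aux[OF assms] psum_inj_aux[OF assms(2,1,4,3) e[symmetric]] by (metis linorder_neqE_nat)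
  have "a = a'" using take_psum[of a b] take_psum[of a' b'] e l by metis
  moreover have "map (\<lambda>x. x + length a) b = map (\<lambda>x. x + length a) b'"
    using drop_psum[of a b] drop_psum[of a' b'] e l by metis
  then have "b = b'" by (simp add: inj_map_eq_map inj_on_def)
  ultimately show ?thesis by simp
qed

lemma pskew_inj_aux:
  assumes a: "Imc a" and a': "Imc a'" and b: "separable b" and b': "separable b'"
    and e: "pskew a b = pskew a' b'" and l: "length a < length a'"
  shows False
proof -
  let ?p = "pskew a b"
  have va: "vals a" "a \<noteq> []" "vals b" using a b sep_vals by (auto simp: Imc_def)
  have sa': "separable a'" using a' by (simp add: Imc_def)
  have ta: "take (length a') ?p = map (\<lambda>x. x + length b') a'" using e take_pskew by metis
  have t1: "map (\<lambda>x. x + length b') (take (length a) a') = map (\<lambda>x. x + length b) a"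
  proof -
    have "map (\<lambda>x. x + length b') (take (length a) a') = take (length a) (take (length a') ?p)"
      using ta by (simp add: take_map)
    also have "\<dots> = take (length a) ?p" using l by simp
    finally show ?thesis by (simp add: take_pskew)
  qed
  have "set (map (\<lambda>x. x + length b') (drop (length a) a')) \<subseteq> set (drop (length a) ?p)"
    using ta by (metis drop_map drop_take set_take_subset)
  then have d1: "set (map (\<lambda>x. x + length b') (drop (length a) a')) \<subseteq> set b"
    by (simp add: drop_pskew)
  have "ssplits a' (length a)"
    unfolding ssplits_def
  proof (intro ballI)
    fix x y assume x: "x \<in> set (take (length a) a')" and y: "y \<in> set (drop (length a) a')"
    have "x + length b' \<in> set (map (\<lambda>x. x + length b) a)" using x t1[symmetric] by (metis image_eqI list.set_map)
    then have "x + length b' > length b" using va unfolding vals_def by auto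
    moreover have "y + length b' \<in> set b" using y d1 by auto
    then have "y + length b' \<le> length b" using va unfolding vals_def by auto
    ultimately show "y < x" by linarith
  qed
  moreover have "0 < length a" using va by simp
  moreover have "2 \<le> length a'" using calculation l by linarith
  ultimately have "Mc a'" unfolding Mc_def using l sa'
    by (intro conjI exI[of _ "length a"]) auto
  then show False using a' by (simp add: Imc_def)
qed

lemma pskew_inj:
  assumes "Imc a" "Imc a'" "separable b" "separable b'" and e: "pskew a b = pskew a' b'"
  shows "a = a' \<and> b = b'"
proof -
  have l: "length a = length a'"
    using pskew_inj_aux[OF assms] pskew_inj_aux[OF assms(2,1,4,3) e[symmetric]] by (metis linorder_neqE_nat)
  have lb: "length b = length b'" using l arg_cong[OF e, of length] by simp
  have "b = b'" using drop_pskew[of a b] drop_pskew[of a' b'] e l by metis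
  moreover have "map (\<lambda>x. x + length b) a = map (\<lambda>x. x + length b) a'"
    using take_pskew[of a b] take_pskew[of a' b'] e l lb by metis
  then have "a = a'" by (simp add: inj_map_eq_map inj_on_def)
  ultimately show ?thesis by simp
qed

lemma Ipc_iff: "Ipc p \<longleftrightarrow> p = [1] \<or> Mc p"
  using sep_tri[of p] not_Pc_Mc[of p] separable.one
  by (auto simp: Ipc_def Pc_def Mc_def reducible_perm_def)

lemma Imc_iff: "Imc p \<longleftrightarrow> p = [1] \<or> Pc p"
  using sep_tri[of p] not_Pc_Mc[of p] separable.one one_not
  by (auto simp: Imc_def Pc_def)

lemma irr_iff: "(separable p \<and> irreducible_perm p) \<longleftrightarrow> Ipc p"
proof
  assume "separable p \<and> irreducible_perm p" then show "Ipc p"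
    by (simp add: Ipc_def reducible_perm_def)
next
  assume h: "Ipc p"
  then have s: "separable p" by (simp add: Ipc_def)
  show "separable p \<and> irreducible_perm p"
  proof (cases "2 \<le> length p")
    case True then show ?thesis using h by (simp add: Ipc_def reducible_perm_def)
  next
    case False
    moreover have "0 < length p" using sep_vals[OF s] by simp
    ultimately have "length p = 1" by linarith
    then show ?thesis using sep_len1[OF s] s by (simp add: irreducible_perm_def)
  qed
qed





lemma sep_one': "separable [Suc 0]" using separable.one by simp

definition W :: "complex \<Rightarrow> complex \<Rightarrow> complex \<Rightarrow> complex \<Rightarrow> nat list \<Rightarrow> complex" where
  "W x1 x2 x3 x4 p = x1 ^ lmax p * x2 ^ rmax p * x3 ^ lmin p * x4 ^ rmin p"

definition F :: "(nat list \<Rightarrow> bool) \<Rightarrow> complex \<Rightarrow> complex \<Rightarrow> complex \<Rightarrow> complex \<Rightarrow> complex fps" where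
  "F C x1 x2 x3 x4 = Abs_fps (\<lambda>n. \<Sum>p\<in>{p. C p \<and> length p = n}. W x1 x2 x3 x4 p)"

lemma conv:
  fixes h :: "nat list \<Rightarrow> nat list \<Rightarrow> nat list" and w w1 w2 :: "nat list \<Rightarrow> complex"
  assumes finA: "\<And>n. finite {a. A a \<and> length a = n}" and finB: "\<And>n. finite {b. B b \<and> length b = n}"
    and len: "\<And>a b. A a \<Longrightarrow> B b \<Longrightarrow> length (h a b) = length a + length b"
    and inj: "\<And>a b a' b'. A a \<Longrightarrow> B b \<Longrightarrow> A a' \<Longrightarrow> B b' \<Longrightarrow> h a b = h a' b' \<Longrightarrow> a = a' \<and> b = b'"
    and surj: "\<And>p. C p \<longleftrightarrow> (\<exists>a b. A a \<and> B b \<and> p = h a b)"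
    and w: "\<And>a b. A a \<Longrightarrow> B b \<Longrightarrow> w (h a b) = w1 a * w2 b"
  shows "Abs_fps (\<lambda>n. \<Sum>p\<in>{p. C p \<and> length p = n}. w p)
    = Abs_fps (\<lambda>n. \<Sum>a\<in>{a. A a \<and> length a = n}. w1 a) * Abs_fps (\<lambda>n. \<Sum>b\<in>{b. B b \<and> length b = n}. w2 b)"
proof (rule fps_ext)
  fix n
  let ?A = "\<lambda>i. {a. A a \<and> length a = i}" and ?B = "\<lambda>i. {b. B b \<and> length b = i}"
  define Sg where "Sg = Sigma {0..n} (\<lambda>i. ?A i \<times> ?B (n - i))"
  define \<phi> where "\<phi> = (\<lambda>x::nat \<times> (nat list \<times> nat list). h (fst (snd x)) (snd (snd x)))"
  have "(Abs_fps (\<lambda>n. \<Sum>a\<in>?A n. w1 a) * Abs_fps (\<lambda>n. \<Sum>b\<in>?B n. w2 b)) $ n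
      = (\<Sum>i=0..n. (\<Sum>a\<in>?A i. w1 a) * (\<Sum>b\<in>?B (n - i). w2 b))" by (simp add: fps_mult_nth)
  also have "\<dots> = (\<Sum>i=0..n. \<Sum>ab\<in>?A i \<times> ?B (n - i). w1 (fst ab) * w2 (snd ab))"
  proof (rule sum.cong[OF refl])
    fix i
    show "(\<Sum>a\<in>?A i. w1 a) * (\<Sum>b\<in>?B (n - i). w2 b) = (\<Sum>ab\<in>?A i \<times> ?B (n - i). w1 (fst ab) * w2 (snd ab))"
      by (simp add: sum_product sum.cartesian_product case_prod_beta)
  qed
  also have "\<dots> = (\<Sum>(i,ab)\<in>Sg. w1 (fst ab) * w2 (snd ab))"
    unfolding Sg_def by (rule sum.Sigma) (auto simp: finA finB)
  also have "\<dots> = (\<Sum>x\<in>Sg. w (\<phi> x))"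
    by (rule sum.cong[OF refl]) (auto simp: Sg_def \<phi>_def w)
  also have "\<dots> = (\<Sum>p\<in>\<phi> ` Sg. w p)"
  proof (rule sum.reindex[symmetric, unfolded comp_def])
    show "inj_on \<phi> Sg"
    proof (rule inj_onI)
      fix x y assume x: "x \<in> Sg" and y: "y \<in> Sg" and e: "\<phi> x = \<phi> y"
      obtain i a b where xe: "x = (i, a, b)" by (cases x) auto
      obtain i' a' b' where ye: "y = (i', a', b')" by (cases y) auto
      have "a = a' \<and> b = b'" using x y e inj unfolding xe ye Sg_def \<phi>_def by auto
      moreover have "i = length a" "i' = length a'" using x y unfolding xe ye Sg_def by auto
      ultimately show "x = y" using xe ye by simp
    qed
  qed
  also have "\<phi> ` Sg = {p. C p \<and> length p = n}"
  proof
    show "\<phi> ` Sg \<subseteq> {p. C p \<and> length p = n}"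
    proof (rule image_subsetI)
      fix x assume "x \<in> Sg"
      then obtain i a b where x: "x = (i, a, b)" "A a" "B b" "length a = i" "length b = n - i" "i \<le> n"
        unfolding Sg_def by auto
      then have "C (h a b)" using surj by blast
      moreover have "length (h a b) = n" using x len by simp
      ultimately show "\<phi> x \<in> {p. C p \<and> length p = n}" using x unfolding \<phi>_def by simp
    qed
    show "{p. C p \<and> length p = n} \<subseteq> \<phi> ` Sg"
    proof
      fix p assume "p \<in> {p. C p \<and> length p = n}"
      then obtain a b where ab: "A a" "B b" "p = h a b" "length p = n" using surj by blast
      then have "length a + length b = n" using len by simp
      then have "(length a, a, b) \<in> Sg" using ab unfolding Sg_def by auto
      moreover have "p = \<phi> (length a, a, b)" using ab unfolding \<phi>_def by simp
      ultimately show "p \<in> \<phi> ` Sg" by blast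
    qed
  qed
  finally show "Abs_fps (\<lambda>n. \<Sum>p\<in>{p. C p \<and> length p = n}. w p) $ n =
    (Abs_fps (\<lambda>n. \<Sum>a\<in>?A n. w1 a) * Abs_fps (\<lambda>n. \<Sum>b\<in>?B n. w2 b)) $ n" by simp
qed

lemma fin_sub: "(\<And>p. A p \<Longrightarrow> separable p) \<Longrightarrow> finite {p. A p \<and> length p = n}"
  by (rule finite_subset[OF _ sep_fin[of n]]) auto

lemma W_psum: assumes "separable a" "separable b"
  shows "W x1 x2 x3 x4 (psum a b) = W x1 1 x3 x4 a * W x1 x2 1 x4 b"
proof -
  have "vals a" "vals b" "a \<noteq> []" "b \<noteq> []" using assms sep_vals by auto
  then show ?thesis unfolding W_def
    by (simp add: lmax_psum rmax_psum lmin_psum rmin_psum power_add mult_ac)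
qed

lemma W_pskew: assumes "separable a" "separable b"
  shows "W x1 x2 x3 x4 (pskew a b) = W x1 x2 x3 1 a * W 1 x2 x3 x4 b"
proof -
  have "vals a" "vals b" "a \<noteq> []" "b \<noteq> []" using assms sep_vals by auto
  then show ?thesis unfolding W_def
    by (simp add: lmax_pskew rmax_pskew lmin_pskew rmin_pskew power_add mult_ac)
qed

lemma F_Pc: "F Pc x1 x2 x3 x4 = F Ipc x1 1 x3 x4 * F separable x1 x2 1 x4"
  unfolding F_def
proof (rule conv[where h = psum])
  show "\<And>n. finite {a. Ipc a \<and> length a = n}" by (rule fin_sub) (simp add: Ipc_def)
  show "\<And>n. finite {b. separable b \<and> length b = n}" by (rule sep_fin)
  show "\<And>a b. length (psum a b) = length a + length b" by simp
  show "\<And>a b a' b'. Ipc a \<Longrightarrow> separable b \<Longrightarrow> Ipc a' \<Longrightarrow> separable b' \<Longrightarrow> psum a b = psum a' b' \<Longrightarrow> a = a' \<and> b = b'"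
    by (rule psum_inj)
  show "\<And>p. Pc p \<longleftrightarrow> (\<exists>a b. Ipc a \<and> separable b \<and> p = psum a b)"
    using Pc_decomp Pc_psum by (auto simp: Ipc_def)
  show "\<And>a b. Ipc a \<Longrightarrow> separable b \<Longrightarrow> W x1 x2 x3 x4 (psum a b) = W x1 1 x3 x4 a * W x1 x2 1 x4 b"
    by (rule W_psum) (auto simp: Ipc_def)
qed

lemma F_Mc: "F Mc x1 x2 x3 x4 = F Imc x1 x2 x3 1 * F separable 1 x2 x3 x4"
  unfolding F_def
proof (rule conv[where h = pskew])
  show "\<And>n. finite {a. Imc a \<and> length a = n}" by (rule fin_sub) (simp add: Imc_def)
  show "\<And>n. finite {b. separable b \<and> length b = n}" by (rule sep_fin)
  show "\<And>a b. length (pskew a b) = length a + length b" by simp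
  show "\<And>a b a' b'. Imc a \<Longrightarrow> separable b \<Longrightarrow> Imc a' \<Longrightarrow> separable b' \<Longrightarrow> pskew a b = pskew a' b' \<Longrightarrow> a = a' \<and> b = b'"
    by (rule pskew_inj)
  show "\<And>p. Mc p \<longleftrightarrow> (\<exists>a b. Imc a \<and> separable b \<and> p = pskew a b)"
    using Mc_decomp Mc_pskew by (auto simp: Imc_def)
  show "\<And>a b. Imc a \<Longrightarrow> separable b \<Longrightarrow> W x1 x2 x3 x4 (pskew a b) = W x1 x2 x3 1 a * W 1 x2 x3 x4 b"
    by (rule W_pskew) (auto simp: Imc_def)
qed

lemma F_disj:
  assumes "\<And>p. A p \<Longrightarrow> separable p" "\<And>p. B p \<Longrightarrow> separable p" "\<And>p. A p \<Longrightarrow> \<not> B p"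
  shows "F (\<lambda>p. A p \<or> B p) x1 x2 x3 x4 = F A x1 x2 x3 x4 + F B x1 x2 x3 x4"
proof (rule fps_ext)
  fix n
  have e: "{p. (A p \<or> B p) \<and> length p = n} = {p. A p \<and> length p = n} \<union> {p. B p \<and> length p = n}" by auto
  show "F (\<lambda>p. A p \<or> B p) x1 x2 x3 x4 $ n = (F A x1 x2 x3 x4 + F B x1 x2 x3 x4) $ n"
    unfolding F_def fps_add_nth e fps_nth_Abs_fps
    by (rule sum.union_disjoint) (auto intro: fin_sub assms dest: assms(3))
qed

lemma stats_one: "lmax [1] = 1" "rmax [1] = 1" "lmin [1] = 1" "rmin [1] = 1"
proof -
  have "\<And>P. {i. i < length [1::nat] \<and> P i} = (if P 0 then {0} else {})" by auto
  then show "lmax [1] = 1" "rmax [1] = 1" "lmin [1] = 1" "rmin [1] = 1"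
    unfolding lmax_def rmax_def lmin_def rmin_def by simp_all
qed

lemma stats_one': "lmax [Suc 0] = 1" "rmax [Suc 0] = 1" "lmin [Suc 0] = 1" "rmin [Suc 0] = 1"
  using stats_one by simp_all

lemma not_red_one: "\<not> reducible_perm [Suc 0]" by (simp add: reducible_perm_def)

lemma F_one: "F (\<lambda>p. p = [1]) x1 x2 x3 x4 = fps_const (x1 * x2 * x3 * x4) * fps_X"
proof (rule fps_ext)
  fix n
  show "F (\<lambda>p. p = [1]) x1 x2 x3 x4 $ n = (fps_const (x1 * x2 * x3 * x4) * fps_X) $ n"
  proof (cases "n = 1")
    case True
    then have "{p. p = [1] \<and> length p = n} = {[Suc 0]}" by auto
    then show ?thesis unfolding F_def using True by (simp add: W_def stats_one')
  next
    case False
    then have e: "{p. p = [1] \<and> length p = n} = {}" by auto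
    show ?thesis unfolding F_def fps_nth_Abs_fps e using False by simp
  qed
qed

lemma F_one': "F (\<lambda>p. p = [Suc 0]) x1 x2 x3 x4 = fps_const (x1 * x2 * x3 * x4) * fps_X"
  using F_one by simp

lemma sep_eq: "separable = (\<lambda>p. p = [1] \<or> (Pc p \<or> Mc p))"
  using sep_tri separable.one by (auto simp: Pc_def Mc_def fun_eq_iff)
lemma Ipc_eq: "Ipc = (\<lambda>p. p = [1] \<or> Mc p)" using Ipc_iff by auto
lemma Imc_eq: "Imc = (\<lambda>p. p = [1] \<or> Pc p)" using Imc_iff by auto

lemma Fsep: "F separable x1 x2 x3 x4 = fps_const (x1 * x2 * x3 * x4) * fps_X + (F Pc x1 x2 x3 x4 + F Mc x1 x2 x3 x4)"
proof -
  have "F (\<lambda>p. p = [1] \<or> (Pc p \<or> Mc p)) x1 x2 x3 x4 = F (\<lambda>p. p = [1]) x1 x2 x3 x4 + F (\<lambda>p. Pc p \<or> Mc p) x1 x2 x3 x4"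
    by (rule F_disj) (auto simp: Pc_def Mc_def not_red_one intro: sep_one')
  also have "F (\<lambda>p. Pc p \<or> Mc p) x1 x2 x3 x4 = F Pc x1 x2 x3 x4 + F Mc x1 x2 x3 x4"
    by (rule F_disj) (use not_Pc_Mc in \<open>auto simp: Pc_def Mc_def\<close>)
  finally show ?thesis unfolding sep_eq[symmetric] F_one by simp
qed

lemma FIpc: "F Ipc x1 x2 x3 x4 = fps_const (x1 * x2 * x3 * x4) * fps_X + F Mc x1 x2 x3 x4"
  unfolding Ipc_eq by (subst F_disj) (auto simp: Mc_def F_one' intro: sep_one')

lemma FImc: "F Imc x1 x2 x3 x4 = fps_const (x1 * x2 * x3 * x4) * fps_X + F Pc x1 x2 x3 x4"
  unfolding Imc_eq by (subst F_disj) (auto simp: Pc_def not_red_one F_one' intro: sep_one')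

lemma F_nth0: "(\<And>p. A p \<Longrightarrow> separable p) \<Longrightarrow> fps_nth (F A x1 x2 x3 x4) 0 = 0"
proof -
  assume h: "\<And>p. A p \<Longrightarrow> separable p"
  have e: "{p. A p \<and> length p = 0} = {}" using h sep_vals by fastforce
  show ?thesis unfolding F_def fps_nth_Abs_fps e by simp
qed





abbreviation "Fs \<equiv> F separable"
abbreviation "Fp \<equiv> F Pc"
abbreviation "Fm \<equiv> F Mc"

lemma EqS: "Fs x1 x2 x3 x4 = fps_const x1 * fps_const x2 * fps_const x3 * fps_const x4 * fps_X + Fp x1 x2 x3 x4 + Fm x1 x2 x3 x4"
  by (simp only: Fsep fps_const_mult add.assoc)
lemma EqP: "Fp x1 x2 x3 x4 = (fps_const x1 * fps_const x3 * fps_const x4 * fps_X + Fm x1 1 x3 x4) * Fs x1 x2 1 x4"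
  by (simp only: F_Pc FIpc fps_const_mult mult_1_right)
lemma EqM: "Fm x1 x2 x3 x4 = (fps_const x1 * fps_const x2 * fps_const x3 * fps_X + Fp x1 x2 x3 1) * Fs 1 x2 x3 x4"
  by (simp only: F_Mc FImc fps_const_mult mult_1_right)

lemma quadL: "Fs 1 1 1 1 * (Fs z 1 1 1)^2 + (fps_const z * fps_X * (1 + Fs 1 1 1 1) - 1) * Fs z 1 1 1 + fps_const z * fps_X * (1 + Fs 1 1 1 1) = 0"
proof -
  have 1: "Fp z 1 1 1 = (fps_const z * fps_X + Fm z 1 1 1) * Fs z 1 1 1" using EqP[of z 1 1 1] by simp
  have 2: "Fm z 1 1 1 = (fps_const z * fps_X + Fp z 1 1 1) * Fs 1 1 1 1" using EqM[of z 1 1 1] by simp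
  have 3: "Fs z 1 1 1 = fps_const z * fps_X + Fp z 1 1 1 + Fm z 1 1 1" using EqS[of z 1 1 1] by simp
  show ?thesis using 1 2 3 by algebra
qed


lemma quadR: "Fs 1 1 1 1 * (Fs 1 z 1 1)^2 + (fps_const z * fps_X * (1 + Fs 1 1 1 1) - 1) * Fs 1 z 1 1 + fps_const z * fps_X * (1 + Fs 1 1 1 1) = 0"
proof -
  have 1: "Fp 1 z 1 1 = (fps_X + Fm 1 1 1 1) * Fs 1 z 1 1" using EqP[of 1 z 1 1] by simp
  have 2: "Fm 1 z 1 1 = (fps_const z * fps_X + Fp 1 z 1 1) * Fs 1 z 1 1" using EqM[of 1 z 1 1] by simp
  have 3: "Fs 1 z 1 1 = fps_const z * fps_X + Fp 1 z 1 1 + Fm 1 z 1 1" using EqS[of 1 z 1 1] by simp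
  have 4: "Fp 1 1 1 1 = (fps_X + Fm 1 1 1 1) * Fs 1 1 1 1" using EqP[of 1 1 1 1] by simp
  have 5: "Fs 1 1 1 1 = fps_X + Fp 1 1 1 1 + Fm 1 1 1 1" using EqS[of 1 1 1 1] by simp
  show ?thesis using 1 2 3 4 5 by algebra
qed

lemma quadN: "Fs 1 1 1 1 * (Fs 1 1 z 1)^2 + (fps_const z * fps_X * (1 + Fs 1 1 1 1) - 1) * Fs 1 1 z 1 + fps_const z * fps_X * (1 + Fs 1 1 1 1) = 0"
proof -
  have 1: "Fp 1 1 z 1 = (fps_const z * fps_X + Fm 1 1 z 1) * Fs 1 1 1 1" using EqP[of 1 1 z 1] by simp
  have 2: "Fm 1 1 z 1 = (fps_const z * fps_X + Fp 1 1 z 1) * Fs 1 1 z 1" using EqM[of 1 1 z 1] by simp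
  have 3: "Fs 1 1 z 1 = fps_const z * fps_X + Fp 1 1 z 1 + Fm 1 1 z 1" using EqS[of 1 1 z 1] by simp
  show ?thesis using 1 2 3 by algebra
qed

lemma quadMn: "Fs 1 1 1 1 * (Fs 1 1 1 z)^2 + (fps_const z * fps_X * (1 + Fs 1 1 1 1) - 1) * Fs 1 1 1 z + fps_const z * fps_X * (1 + Fs 1 1 1 1) = 0"
proof -
  have 1: "Fp 1 1 1 z = (fps_const z * fps_X + Fm 1 1 1 z) * Fs 1 1 1 z" using EqP[of 1 1 1 z] by simp
  have 2: "Fm 1 1 1 z = (fps_X + Fp 1 1 1 1) * Fs 1 1 1 z" using EqM[of 1 1 1 z] by simp
  have 3: "Fs 1 1 1 z = fps_const z * fps_X + Fp 1 1 1 z + Fm 1 1 1 z" using EqS[of 1 1 1 z] by simp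
  have 4: "Fm 1 1 1 1 = (fps_X + Fp 1 1 1 1) * Fs 1 1 1 1" using EqM[of 1 1 1 1] by simp
  have 5: "Fs 1 1 1 1 = fps_X + Fp 1 1 1 1 + Fm 1 1 1 1" using EqS[of 1 1 1 1] by simp
  show ?thesis using 1 2 3 4 5 by algebra
qed

lemma quad_uniq:
  fixes c q y1 y2 :: "complex fps"
  assumes "c $ 0 = 0" "q $ 0 = 0" and h1: "c*y1^2 + (q-1)*y1 + q = 0" and h2: "c*y2^2 + (q-1)*y2 + q = 0"
  shows "y1 = y2"
proof -
  have "(y1 - y2) * (c*(y1+y2) + q - 1) = 0" using h1 h2 by algebra
  moreover have "(c*(y1+y2) + q - 1) $ 0 \<noteq> 0" using assms by simp
  then have "c*(y1+y2) + q - 1 \<noteq> 0" by (metis fps_zero_nth)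
  ultimately show ?thesis by simp
qed

lemma Fs_nth0: "Fs x1 x2 x3 x4 $ 0 = 0" by (rule F_nth0) simp

lemma SL: "Fs z 1 1 1 = Fs 1 z 1 1"
  by (rule quad_uniq[OF Fs_nth0 _ quadL quadR]) simp
lemma SN: "Fs 1 1 z 1 = Fs 1 z 1 1"
  by (rule quad_uniq[OF Fs_nth0 _ quadN quadR]) simp
lemma SMn: "Fs 1 1 1 z = Fs 1 z 1 1"
  by (rule quad_uniq[OF Fs_nth0 _ quadMn quadR]) simp

lemma IpL: "(fps_const z * fps_X + Fm z 1 1 1) * (1 + Fs 1 z 1 1) = Fs 1 z 1 1"
proof -
  have 1: "Fp z 1 1 1 = (fps_const z * fps_X + Fm z 1 1 1) * Fs z 1 1 1" using EqP[of z 1 1 1] by simp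
  have 3: "Fs z 1 1 1 = fps_const z * fps_X + Fp z 1 1 1 + Fm z 1 1 1" using EqS[of z 1 1 1] by simp
  show ?thesis using 1 3 SL[of z] by algebra
qed
lemma ImN: "(fps_const z * fps_X + Fp 1 1 z 1) * (1 + Fs 1 z 1 1) = Fs 1 z 1 1"
proof -
  have 2: "Fm 1 1 z 1 = (fps_const z * fps_X + Fp 1 1 z 1) * Fs 1 1 z 1" using EqM[of 1 1 z 1] by simp
  have 3: "Fs 1 1 z 1 = fps_const z * fps_X + Fp 1 1 z 1 + Fm 1 1 z 1" using EqS[of 1 1 z 1] by simp
  show ?thesis using 2 3 SN[of z] by algebra
qed
lemma IpMn: "(fps_const z * fps_X + Fm 1 1 1 z) * (1 + Fs 1 z 1 1) = Fs 1 z 1 1"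
proof -
  have 1: "Fp 1 1 1 z = (fps_const z * fps_X + Fm 1 1 1 z) * Fs 1 1 1 z" using EqP[of 1 1 1 z] by simp
  have 3: "Fs 1 1 1 z = fps_const z * fps_X + Fp 1 1 1 z + Fm 1 1 1 z" using EqS[of 1 1 1 z] by simp
  show ?thesis using 1 3 SMn[of z] by algebra
qed
lemma ImR: "(fps_const z * fps_X + Fp 1 z 1 1) * (1 + Fs 1 z 1 1) = Fs 1 z 1 1"
proof -
  have 2: "Fm 1 z 1 1 = (fps_const z * fps_X + Fp 1 z 1 1) * Fs 1 z 1 1" using EqM[of 1 z 1 1] by simp
  have 3: "Fs 1 z 1 1 = fps_const z * fps_X + Fp 1 z 1 1 + Fm 1 z 1 1" using EqS[of 1 z 1 1] by simp
  show ?thesis using 2 3 by algebra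
qed

lemma Qa: "(fps_const x * fps_const y * fps_X + Fm x 1 y 1) * (1 - Fs 1 x 1 1 * Fs 1 y 1 1)
   = fps_const x * fps_const y * fps_X * (1 + Fs 1 y 1 1)"
proof -
  have 1: "Fm x 1 y 1 = (fps_const x * fps_const y * fps_X + Fp x 1 y 1) * Fs 1 1 y 1" using EqM[of x 1 y 1] by simp
  have 2: "Fp x 1 y 1 = (fps_const x * fps_const y * fps_X + Fm x 1 y 1) * Fs x 1 1 1" using EqP[of x 1 y 1] by simp
  show ?thesis using 1 2 SN[of y] SL[of x] by algebra
qed

lemma Qb: "(fps_const y * fps_const x * fps_X + Fp y 1 x 1) * (1 - Fs 1 x 1 1 * Fs 1 y 1 1)
   = fps_const x * fps_const y * fps_X * (1 + Fs 1 y 1 1)"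
proof -
  have 1: "Fp y 1 x 1 = (fps_const y * fps_const x * fps_X + Fm y 1 x 1) * Fs y 1 1 1" using EqP[of y 1 x 1] by simp
  have 2: "Fm y 1 x 1 = (fps_const y * fps_const x * fps_X + Fp y 1 x 1) * Fs 1 1 x 1" using EqM[of y 1 x 1] by simp
  show ?thesis using 1 2 SN[of x] SL[of y] by algebra
qed

lemma Qc: "(fps_const y * fps_const x * fps_X + Fm 1 1 y x) * (1 - Fs 1 x 1 1 * Fs 1 y 1 1)
   = fps_const x * fps_const y * fps_X * (1 + Fs 1 y 1 1)"
proof -
  have 1: "Fm 1 1 y x = (fps_const y * fps_X + Fp 1 1 y 1) * Fs 1 1 y x" using EqM[of 1 1 y x] by simp
  have 2: "Fp 1 1 y x = (fps_const y * fps_const x * fps_X + Fm 1 1 y x) * Fs 1 1 1 x" using EqP[of 1 1 y x] by simp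
  have 3: "Fs 1 1 y x = fps_const y * fps_const x * fps_X + Fp 1 1 y x + Fm 1 1 y x" using EqS[of 1 1 y x] by simp
  show ?thesis using 1 2 3 ImN[of y] SMn[of x] by algebra
qed

lemma Qd: "(fps_const y * fps_const x * fps_X + Fp y x 1 1) * (1 - Fs 1 x 1 1 * Fs 1 y 1 1)
   = fps_const x * fps_const y * fps_X * (1 + Fs 1 y 1 1)"
proof -
  have 1: "Fp y x 1 1 = (fps_const y * fps_X + Fm y 1 1 1) * Fs y x 1 1" using EqP[of y x 1 1] by simp
  have 2: "Fm y x 1 1 = (fps_const y * fps_const x * fps_X + Fp y x 1 1) * Fs 1 x 1 1" using EqM[of y x 1 1] by simp
  have 3: "Fs y x 1 1 = fps_const y * fps_const x * fps_X + Fp y x 1 1 + Fm y x 1 1" using EqS[of y x 1 1] by simp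
  show ?thesis using 1 2 3 IpL[of y] by algebra
qed

lemma Ka: "Fs x y 1 1 * (1 - Fs 1 x 1 1 * Fs 1 y 1 1)
   = fps_const x * fps_const y * fps_X * (1 + Fs 1 x 1 1) * (1 + Fs 1 y 1 1)"
proof -
  have 1: "Fp x y 1 1 = (fps_const x * fps_X + Fm x 1 1 1) * Fs x y 1 1" using EqP[of x y 1 1] by simp
  have 2: "Fm x y 1 1 = (fps_const x * fps_const y * fps_X + Fp x y 1 1) * Fs 1 y 1 1" using EqM[of x y 1 1] by simp
  have 3: "Fs x y 1 1 = fps_const x * fps_const y * fps_X + Fp x y 1 1 + Fm x y 1 1" using EqS[of x y 1 1] by simp
  show ?thesis using 1 2 3 IpL[of x] by algebra
qed

lemma Kb: "Fs 1 1 x y * (1 - Fs 1 x 1 1 * Fs 1 y 1 1)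
   = fps_const x * fps_const y * fps_X * (1 + Fs 1 x 1 1) * (1 + Fs 1 y 1 1)"
proof -
  have 1: "Fp 1 1 x y = (fps_const x * fps_const y * fps_X + Fm 1 1 x y) * Fs 1 1 1 y" using EqP[of 1 1 x y] by simp
  have 2: "Fm 1 1 x y = (fps_const x * fps_X + Fp 1 1 x 1) * Fs 1 1 x y" using EqM[of 1 1 x y] by simp
  have 3: "Fs 1 1 x y = fps_const x * fps_const y * fps_X + Fp 1 1 x y + Fm 1 1 x y" using EqS[of 1 1 x y] by simp
  show ?thesis using 1 2 3 ImN[of x] SMn[of y] by algebra
qed

lemma Kc: "Fs 1 x 1 y * (1 - Fs 1 x 1 1 * Fs 1 y 1 1)
   = fps_const x * fps_const y * fps_X * (1 + Fs 1 x 1 1) * (1 + Fs 1 y 1 1)"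
proof -
  have 1: "Fp 1 x 1 y = (fps_const y * fps_X + Fm 1 1 1 y) * Fs 1 x 1 y" using EqP[of 1 x 1 y] by simp
  have 2: "Fm 1 x 1 y = (fps_const x * fps_X + Fp 1 x 1 1) * Fs 1 x 1 y" using EqM[of 1 x 1 y] by simp
  have 3: "Fs 1 x 1 y = fps_const x * fps_const y * fps_X + Fp 1 x 1 y + Fm 1 x 1 y" using EqS[of 1 x 1 y] by simp
  show ?thesis using 1 2 3 IpMn[of y] ImR[of x] by algebra
qed





lemma S_eq: "Fs 1 z 1 1 = Sgf z" by (simp add: Sgf_def F_def W_def)
lemma Sgf0[simp]: "Sgf z $ 0 = 0" using Fs_nth0[of 1 z 1 1] S_eq by simp

lemma inv_unit: "(f::complex fps) $ 0 \<noteq> 0 \<Longrightarrow> f * inverse f = 1"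
  by (rule inverse_mult_eq_1')

lemma Agf0[simp]: "Agf z2 z3 $ 0 = 0" by (simp add: Agf_def)
lemma Dgf0: "Dgf z2 z3 $ 0 \<noteq> 0" by (simp add: Dgf_def)

lemma Xa: "fps_const z2 * fps_const z3 * fps_X + Fp 1 z2 z3 1 = Agf z2 z3 + fps_X * fps_const (z2*z3)"
proof -
  define s3 where "s3 = Sgf z3"
  define i3 where "i3 = inverse (s3 + 1)"
  have h: "(s3 + 1) * i3 = 1" unfolding i3_def by (rule inv_unit) (simp add: s3_def)
  have a: "Agf z2 z3 = Sgf z2 * (fps_const z3 * fps_X + s3^2 * i3)"
    unfolding Agf_def s3_def i3_def by (simp add: fps_divide_unit)
  have 1: "Fp 1 z2 z3 1 = (fps_const z3 * fps_X + Fm 1 1 z3 1) * Fs 1 z2 1 1" using EqP[of 1 z2 z3 1] by simp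
  have 2: "Fm 1 1 z3 1 = (fps_const z3 * fps_X + Fp 1 1 z3 1) * Fs 1 1 z3 1" using EqM[of 1 1 z3 1] by simp
  have 3: "Fs 1 1 z3 1 = s3" using SN[of z3] S_eq s3_def by simp
  have 4: "(fps_const z3 * fps_X + Fp 1 1 z3 1) * (1 + s3) = s3" using ImN[of z3] S_eq s3_def by simp
  have c: "fps_const (z2 * z3) = fps_const z2 * fps_const z3" by simp
  show ?thesis unfolding a c using 1 2 3 4 h S_eq[of z2] by algebra
qed

lemma Xb: "fps_const z3 * fps_const z2 * fps_X + Fm z3 1 1 z2 = Agf z2 z3 + fps_X * fps_const (z2*z3)"
proof -
  define s3 where "s3 = Sgf z3"
  define i3 where "i3 = inverse (s3 + 1)"
  have h: "(s3 + 1) * i3 = 1" unfolding i3_def by (rule inv_unit) (simp add: s3_def)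
  have a: "Agf z2 z3 = Sgf z2 * (fps_const z3 * fps_X + s3^2 * i3)"
    unfolding Agf_def s3_def i3_def by (simp add: fps_divide_unit)
  have 1: "Fm z3 1 1 z2 = (fps_const z3 * fps_X + Fp z3 1 1 1) * Fs 1 1 1 z2" using EqM[of z3 1 1 z2] by simp
  have 2: "Fp z3 1 1 1 = (fps_const z3 * fps_X + Fm z3 1 1 1) * Fs z3 1 1 1" using EqP[of z3 1 1 1] by simp
  have 3: "Fs z3 1 1 1 = s3" using SL[of z3] S_eq s3_def by simp
  have 4: "(fps_const z3 * fps_X + Fm z3 1 1 1) * (1 + s3) = s3" using IpL[of z3] S_eq s3_def by simp
  have 5: "Fs 1 1 1 z2 = Sgf z2" using SMn[of z2] S_eq by simp
  have c: "fps_const (z2 * z3) = fps_const z2 * fps_const z3" by simp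
  show ?thesis unfolding a c using 1 2 3 4 5 h by algebra
qed

lemma PV:
  assumes q: "q * (1 - Sgf z1 * Sgf z3) = fps_const z1 * fps_const z3 * fps_X * (1 + Sgf z3)"
    and k: "k * (1 - Sgf z1 * Sgf z2) = fps_const z1 * fps_const z2 * fps_X * (1 + Sgf z1) * (1 + Sgf z2)"
  shows "q * k = Egf z1 z2 z3 - fps_const (z1*z2*z3) * fps_X"
proof -
  define Dn where "Dn = (1 - Sgf z1 * Sgf z3) * (1 - Sgf z1 * Sgf z2)"
  define Nm where "Nm = (Sgf z1 + 1) * (Sgf z2 + 1) * (Sgf z3 + 1) * fps_X^2 * fps_const (z1^2 * z2 * z3)"
  have d0: "Dn $ 0 \<noteq> 0" by (simp add: Dn_def)
  have e: "Egf z1 z2 z3 - fps_const (z1*z2*z3) * fps_X = Nm / Dn" by (simp add: Egf_def Nm_def Dn_def Let_def)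
  have c: "fps_const (z1^2 * z2 * z3) = fps_const z1 * fps_const z1 * fps_const z2 * fps_const z3"
    by (simp add: power2_eq_square)
  have "Nm = q * k * Dn" unfolding Nm_def Dn_def c using q k by algebra
  then have "Nm / Dn = q * k * (Dn * inverse Dn)" by (simp add: fps_divide_unit[OF d0] mult.assoc)
  also have "\<dots> = q * k" using inv_unit[OF d0] by simp
  finally show ?thesis using e by simp
qed

lemma GV: assumes "g * Dgf z2 z3 = e" shows "g = e / Dgf z2 z3"
proof -
  have "e / Dgf z2 z3 = g * (Dgf z2 z3 * inverse (Dgf z2 z3))"
    using assms by (simp add: fps_divide_unit[OF Dgf0] mult.assoc)
  also have "\<dots> = g" using inv_unit[OF Dgf0] by simp
  finally show ?thesis by simp
qed

lemma aux_fin: fixes g dd ee tp :: "complex fps" assumes "g * dd = ee"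
  shows "(g - (ee - tp)) * dd = tp + (1 - dd) * (ee - tp)"
proof -
  have "(g - (ee - tp)) * dd = g * dd - ee * dd + tp * dd" by (simp add: algebra_simps)
  also have "\<dots> = tp + (1 - dd) * (ee - tp)" using assms by (simp add: algebra_simps)
  finally show ?thesis .
qed

lemma finish:
  assumes g: "g * Dgf z2 z3 = Egf z1 z2 z3" and p: "p = Egf z1 z2 z3 - tp"
  shows "g = Egf z1 z2 z3 / Dgf z2 z3"
    and "g - p = (tp + (Agf z2 z3 + fps_X * fps_const (z2 * z3)) * (Egf z1 z2 z3 - tp)) / Dgf z2 z3"
proof -
  show "g = Egf z1 z2 z3 / Dgf z2 z3" using GV[OF g] .
  have "1 - Dgf z2 z3 = Agf z2 z3 + fps_X * fps_const (z2 * z3)" unfolding Dgf_def by simp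
  then have "(g - p) * Dgf z2 z3 = tp + (Agf z2 z3 + fps_X * fps_const (z2 * z3)) * (Egf z1 z2 z3 - tp)"
    using aux_fin[OF g, of tp] p by simp
  then show "g - p = (tp + (Agf z2 z3 + fps_X * fps_const (z2 * z3)) * (Egf z1 z2 z3 - tp)) / Dgf z2 z3"
    by (rule GV)
qed

lemma c3: "fps_const ((z1::complex) * z2 * z3) = fps_const z1 * fps_const z2 * fps_const z3" by simp
lemma c2: "fps_const ((z2::complex) * z3) = fps_const z2 * fps_const z3" by simp

lemma T1: "Fp z1 z2 z3 1 = Egf z1 z2 z3 - fps_const (z1*z2*z3) * fps_X"
  "Fs z1 z2 z3 1 * Dgf z2 z3 = Egf z1 z2 z3"
proof -
  have 1: "Fp z1 z2 z3 1 = (fps_const z1 * fps_const z3 * fps_X + Fm z1 1 z3 1) * Fs z1 z2 1 1"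
    using EqP[of z1 z2 z3 1] by simp
  show P: "Fp z1 z2 z3 1 = Egf z1 z2 z3 - fps_const (z1*z2*z3) * fps_X"
    unfolding 1 by (rule PV[OF Qa[of z1 z3, unfolded S_eq] Ka[of z1 z2, unfolded S_eq]])
  have s: "Fs z1 z2 z3 1 = fps_const z1 * fps_const z2 * fps_const z3 * fps_X + Fp z1 z2 z3 1 + Fm z1 z2 z3 1"
    using EqS[of z1 z2 z3 1] by simp
  have m: "Fm z1 z2 z3 1 = (fps_const z1 * fps_const z2 * fps_const z3 * fps_X + Fp z1 z2 z3 1) * Fs 1 z2 z3 1"
    using EqM[of z1 z2 z3 1] by simp
  have s23: "Fs 1 z2 z3 1 = fps_const z2 * fps_const z3 * fps_X + Fp 1 z2 z3 1 + Fm 1 z2 z3 1"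
    using EqS[of 1 z2 z3 1] by simp
  have m23: "Fm 1 z2 z3 1 = (fps_const z2 * fps_const z3 * fps_X + Fp 1 z2 z3 1) * Fs 1 z2 z3 1"
    using EqM[of 1 z2 z3 1] by simp
  show "Fs z1 z2 z3 1 * Dgf z2 z3 = Egf z1 z2 z3"
    using s m s23 m23 Xa[of z2 z3] P unfolding Dgf_def c3 c2 by algebra
qed

lemma T3: "Fp 1 z2 z3 z1 = Egf z1 z2 z3 - fps_const (z1*z2*z3) * fps_X"
  "Fs 1 z2 z3 z1 * Dgf z2 z3 = Egf z1 z2 z3"
proof -
  have 1: "Fp 1 z2 z3 z1 = (fps_const z3 * fps_const z1 * fps_X + Fm 1 1 z3 z1) * Fs 1 z2 1 z1"
    using EqP[of 1 z2 z3 z1] by simp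
  have k: "Fs 1 z2 1 z1 * (1 - Sgf z1 * Sgf z2) = fps_const z1 * fps_const z2 * fps_X * (1 + Sgf z1) * (1 + Sgf z2)"
    using Kc[of z2 z1, unfolded S_eq] by (simp add: mult_ac)
  show P: "Fp 1 z2 z3 z1 = Egf z1 z2 z3 - fps_const (z1*z2*z3) * fps_X"
    unfolding 1 by (rule PV[OF Qc[of z3 z1, unfolded S_eq] k])
  have s: "Fs 1 z2 z3 z1 = fps_const z1 * fps_const z2 * fps_const z3 * fps_X + Fp 1 z2 z3 z1 + Fm 1 z2 z3 z1"
    using EqS[of 1 z2 z3 z1] by (simp add: mult_ac)
  have m: "Fm 1 z2 z3 z1 = (fps_const z2 * fps_const z3 * fps_X + Fp 1 z2 z3 1) * Fs 1 z2 z3 z1"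
    using EqM[of 1 z2 z3 z1] by simp
  show "Fs 1 z2 z3 z1 * Dgf z2 z3 = Egf z1 z2 z3"
    using s m Xa[of z2 z3] P unfolding Dgf_def c3 c2 by algebra
qed

lemma T2: "Fm z3 1 z1 z2 = Egf z1 z2 z3 - fps_const (z1*z2*z3) * fps_X"
  "Fs z3 1 z1 z2 * Dgf z2 z3 = Egf z1 z2 z3"
proof -
  have 1: "Fm z3 1 z1 z2 = (fps_const z3 * fps_const z1 * fps_X + Fp z3 1 z1 1) * Fs 1 1 z1 z2"
    using EqM[of z3 1 z1 z2] by simp
  show M: "Fm z3 1 z1 z2 = Egf z1 z2 z3 - fps_const (z1*z2*z3) * fps_X"
    unfolding 1 by (rule PV[OF Qb[of z3 z1, unfolded S_eq] Kb[of z1 z2, unfolded S_eq]])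
  have s: "Fs z3 1 z1 z2 = fps_const z1 * fps_const z2 * fps_const z3 * fps_X + Fp z3 1 z1 z2 + Fm z3 1 z1 z2"
    using EqS[of z3 1 z1 z2] by (simp add: mult_ac)
  have p: "Fp z3 1 z1 z2 = (fps_const z1 * fps_const z2 * fps_const z3 * fps_X + Fm z3 1 z1 z2) * Fs z3 1 1 z2"
    using EqP[of z3 1 z1 z2] by (simp add: mult_ac)
  have sw: "Fs z3 1 1 z2 = fps_const z3 * fps_const z2 * fps_X + Fp z3 1 1 z2 + Fm z3 1 1 z2"
    using EqS[of z3 1 1 z2] by simp
  have pw: "Fp z3 1 1 z2 = (fps_const z3 * fps_const z2 * fps_X + Fm z3 1 1 z2) * Fs z3 1 1 z2"
    using EqP[of z3 1 1 z2] by simp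
  show "Fs z3 1 z1 z2 * Dgf z2 z3 = Egf z1 z2 z3"
    using s p sw pw Xb[of z3 z2] M unfolding Dgf_def c3 c2 by algebra
qed

lemma T4: "Fm z3 z1 1 z2 = Egf z1 z2 z3 - fps_const (z1*z2*z3) * fps_X"
  "Fs z3 z1 1 z2 * Dgf z2 z3 = Egf z1 z2 z3"
proof -
  have 1: "Fm z3 z1 1 z2 = (fps_const z3 * fps_const z1 * fps_X + Fp z3 z1 1 1) * Fs 1 z1 1 z2"
    using EqM[of z3 z1 1 z2] by simp
  show M: "Fm z3 z1 1 z2 = Egf z1 z2 z3 - fps_const (z1*z2*z3) * fps_X"
    unfolding 1 by (rule PV[OF Qd[of z3 z1, unfolded S_eq] Kc[of z1 z2, unfolded S_eq]])
  have s: "Fs z3 z1 1 z2 = fps_const z1 * fps_const z2 * fps_const z3 * fps_X + Fp z3 z1 1 z2 + Fm z3 z1 1 z2"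
    using EqS[of z3 z1 1 z2] by (simp add: mult_ac)
  have p: "Fp z3 z1 1 z2 = (fps_const z3 * fps_const z2 * fps_X + Fm z3 1 1 z2) * Fs z3 z1 1 z2"
    using EqP[of z3 z1 1 z2] by simp
  show "Fs z3 z1 1 z2 * Dgf z2 z3 = Egf z1 z2 z3"
    using s p Xb[of z3 z2] M unfolding Dgf_def c3 c2 by algebra
qed





lemma sqrt_uniq:
  fixes a b :: "complex fps"
  assumes "a^2 = b^2" "a $ 0 = b $ 0" "a $ 0 \<noteq> 0"
  shows "a = b"
proof -
  have "(a - b) * (a + b) = 0" using assms(1) by algebra
  moreover have "(a + b) $ 0 \<noteq> 0" using assms(2,3) by simp
  then have "a + b \<noteq> 0" by (metis fps_zero_nth)
  ultimately show ?thesis by simp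
qed

lemma fsqrt_sq: assumes "a $ 0 = 1" shows "fsqrt a ^ 2 = a" "fsqrt a $ 0 = 1"
proof -
  have "(csqrt (a $ 0)) ^ Suc 1 = a $ 0" using assms by simp
  then have "fps_radical (\<lambda>_ x. csqrt x) (Suc 1) a ^ Suc 1 = a"
    using power_radical[of a "\<lambda>_ x. csqrt x" 1] assms by simp
  then show "fsqrt a ^ 2 = a" unfolding fsqrt_def by (simp add: numeral_2_eq_2)
  show "fsqrt a $ 0 = 1" unfolding fsqrt_def using assms by simp
qed

lemma S_eq': "Fs 1 z 1 1 = Sgf z" by (simp add: Sgf_def F_def W_def)

lemma Sclosed_eq: "Sgf z = Sclosed z"
proof -
  define c where "c = Fs 1 1 1 1"
  define R where "R = Sgf z"
  define X where "X = (fps_X :: complex fps)"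
  define cz where "cz = fps_const z"
  have c0: "c $ 0 = 0" unfolding c_def by (rule Fs_nth0)
  have R0: "R $ 0 = 0" unfolding R_def using Fs_nth0[of 1 z 1 1] S_eq'[of z] by simp
  have X0: "X $ 0 = 0" unfolding X_def by simp
  have qR: "c * R^2 + (cz * X * (1 + c) - 1) * R + cz * X * (1 + c) = 0"
    using quadR[of z] unfolding c_def R_def X_def cz_def S_eq' .
  have qc1: "c * c^2 + (X * (1 + c) - 1) * c + X * (1 + c) = 0"
    using quadR[of 1] unfolding c_def X_def by simp
  have "(1 + c) * (c^2 + (X - 1) * c + X) = 0" using qc1 by algebra
  moreover have "(1 + c) $ 0 \<noteq> 0" using c0 by simp
  then have "1 + c \<noteq> 0" by (metis fps_zero_nth)
  ultimately have qc: "c^2 + (X - 1) * c + X = 0" by simp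
  have Q2: "(X + c) * R^2 + (X + c + 2 * cz * X - 2) * R + 2 * cz * X = 0"
  proof -
    have "(1 + c) * ((X + c) * R^2 + (X + c + 2 * cz * X - 2) * R + 2 * cz * X) = 0"
      using qR qc by algebra
    then show ?thesis using \<open>1 + c \<noteq> 0\<close> by simp
  qed
  define r where "r = fsqrt (fps_X^2 - 6 * fps_X + 1 :: complex fps)"
  have a0: "(fps_X^2 - 6 * fps_X + 1 :: complex fps) $ 0 = 1" by (simp add: fps_X_power_nth)
  have r2: "r^2 = X^2 - 6 * X + 1" unfolding r_def X_def by (rule fsqrt_sq(1)[OF a0])
  have r0: "r $ 0 = 1" unfolding r_def by (rule fsqrt_sq(2)[OF a0])
  have rr: "r = 1 - X - 2 * c"
  proof (rule sqrt_uniq)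
    show "r^2 = (1 - X - 2 * c)^2" using r2 qc by algebra
    show "r $ 0 = (1 - X - 2 * c) $ 0" using r0 X0 c0 by simp
    show "r $ 0 \<noteq> 0" using r0 by simp
  qed
  define q4 where "q4 = inverse (4 :: complex fps)"
  have q4: "4 * q4 = 1" unfolding q4_def by (rule inverse_mult_eq_1') simp
  define h where "h = inverse (2 :: complex fps)"
  have h: "2 * h = 1" unfolding h_def by (rule inverse_mult_eq_1') simp
  have d4: "\<And>x. x / (4 :: complex fps) = x * q4" unfolding q4_def by (simp add: fps_divide_unit)
  define w where "w = (- r * q4 - X * cz + X * q4 + 5 * q4)^2 + r - X - 1"
  define s' where "s' = 1 - h * X - h * c - cz * X - (X + c) * R"
  have sw: "s'^2 = w" unfolding s'_def w_def using rr Q2 q4 h by algebra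
  have s'0: "s' $ 0 = 1" unfolding s'_def using X0 c0 R0 by simp
  have w0: "w $ 0 = 1" using sw s'0 by (metis fps_mult_nth_0 mult_1 power2_eq_square)
  have ss: "fsqrt w = s'"
  proof (rule sqrt_uniq)
    show "fsqrt w ^ 2 = s'^2" using fsqrt_sq(1)[OF w0] sw by simp
    show "fsqrt w $ 0 = s' $ 0" using fsqrt_sq(2)[OF w0] s'0 by simp
    show "fsqrt w $ 0 \<noteq> 0" using fsqrt_sq(2)[OF w0] by simp
  qed
  define Nm where "Nm = 4 * fsqrt w - r + 4 * X * cz + X - 3"
  define Dn where "Dn = 2 * (r - X - 1)"
  have NR: "Nm = R * Dn" unfolding Nm_def Dn_def ss s'_def using rr h by algebra
  have Dn0: "Dn \<noteq> 0"
  proof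
    assume "Dn = 0"
    then have "2 * X = 0" using rr qc q4 unfolding Dn_def by algebra
    then have "(2 * X) $ 1 = 0" by simp
    then show False unfolding X_def by simp
  qed
  have "Sclosed z = Nm / Dn"
    unfolding Sclosed_def Let_def d4 Nm_def Dn_def w_def r_def X_def cz_def ..
  also have "\<dots> = R" unfolding NR using Dn0 by simp
  finally show ?thesis unfolding R_def by simp
qed


theorem theorem8:
  fixes z z1 z2 z3 :: complex
  shows "Sgf z = Sclosed z
    \<and> (\<forall>T \<in> {(lmax, rmax, lmin), (lmin, rmin, lmax), (rmin, rmax, lmin), (rmax, rmin, lmax)}.
           GF separable T z1 z2 z3 = Egf z1 z2 z3 / Dgf z2 z3)
    \<and> (\<forall>T \<in> {(lmax, rmax, lmin), (rmin, rmax, lmin)}.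
           GF (\<lambda>p. separable p \<and> reducible_perm p) T z1 z2 z3
             = Egf z1 z2 z3 - fps_const (z1 * z2 * z3) * fps_X
         \<and> GF (\<lambda>p. separable p \<and> irreducible_perm p) T z1 z2 z3
             = (fps_const (z1 * z2 * z3) * fps_X
                + (Agf z2 z3 + fps_X * fps_const (z2 * z3))
                  * (Egf z1 z2 z3 - fps_const (z1 * z2 * z3) * fps_X)) / Dgf z2 z3)
    \<and> (\<forall>T \<in> {(lmin, rmin, lmax), (rmax, rmin, lmax)}.
           GF (\<lambda>p. separable p \<and> irreducible_perm p) T z1 z2 z3 = Egf z1 z2 z3
         \<and> GF (\<lambda>p. separable p \<and> reducible_perm p) T z1 z2 z3
             = - fps_const (z1 * z2 * z3) * fps_X
               + (fps_const (z1 * z2 * z3) * fps_X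
                  + (Agf z2 z3 + fps_X * fps_const (z2 * z3))
                    * (Egf z1 z2 z3 - fps_const (z1 * z2 * z3) * fps_X)) / Dgf z2 z3)"
  proof -
  have GF1: "\<And>P. GF P (lmax, rmax, lmin) z1 z2 z3 = F P z1 z2 z3 1" by (simp add: GF_def F_def W_def)
  have GF2: "\<And>P. GF P (lmin, rmin, lmax) z1 z2 z3 = F P z3 1 z1 z2" by (simp add: GF_def F_def W_def mult_ac)
  have GF3: "\<And>P. GF P (rmin, rmax, lmin) z1 z2 z3 = F P 1 z2 z3 z1" by (simp add: GF_def F_def W_def mult_ac)
  have GF4: "\<And>P. GF P (rmax, rmin, lmax) z1 z2 z3 = F P z3 z1 1 z2" by (simp add: GF_def F_def W_def mult_ac)
  have red: "(\<lambda>p. separable p \<and> reducible_perm p) = Pc" by (simp add: fun_eq_iff Pc_def)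
  have irr: "(\<lambda>p. separable p \<and> irreducible_perm p) = Ipc" using irr_iff by (simp add: fun_eq_iff)
  let ?tp = "fps_const (z1 * z2 * z3) * fps_X"
  let ?I = "(fps_const (z1 * z2 * z3) * fps_X
                + (Agf z2 z3 + fps_X * fps_const (z2 * z3))
                  * (Egf z1 z2 z3 - fps_const (z1 * z2 * z3) * fps_X)) / Dgf z2 z3"
  note f1 = finish[OF T1(2) T1(1)]
  note f2 = finish[OF T2(2) T2(1)]
  note f3 = finish[OF T3(2) T3(1)]
  note f4 = finish[OF T4(2) T4(1)]
  have s1: "Fs z1 z2 z3 1 = ?tp + Fp z1 z2 z3 1 + Fm z1 z2 z3 1" using EqS[of z1 z2 z3 1] by simp
  have s2: "Fs z3 1 z1 z2 = ?tp + Fp z3 1 z1 z2 + Fm z3 1 z1 z2" using EqS[of z3 1 z1 z2] by (simp add: mult_ac)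
  have s3: "Fs 1 z2 z3 z1 = ?tp + Fp 1 z2 z3 z1 + Fm 1 z2 z3 z1" using EqS[of 1 z2 z3 z1] by (simp add: mult_ac)
  have s4: "Fs z3 z1 1 z2 = ?tp + Fp z3 z1 1 z2 + Fm z3 z1 1 z2" using EqS[of z3 z1 1 z2] by (simp add: mult_ac)
  have i1: "F Ipc z1 z2 z3 1 = ?tp + Fm z1 z2 z3 1" using FIpc[of z1 z2 z3 1] by simp
  have i2: "F Ipc z3 1 z1 z2 = ?tp + Fm z3 1 z1 z2" using FIpc[of z3 1 z1 z2] by (simp add: mult_ac)
  have i3: "F Ipc 1 z2 z3 z1 = ?tp + Fm 1 z2 z3 z1" using FIpc[of 1 z2 z3 z1] by (simp add: mult_ac)
  have i4: "F Ipc z3 z1 1 z2 = ?tp + Fm z3 z1 1 z2" using FIpc[of z3 z1 1 z2] by (simp add: mult_ac)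
  have A1: "GF separable (lmax, rmax, lmin) z1 z2 z3 = Egf z1 z2 z3 / Dgf z2 z3" unfolding GF1 by (rule f1(1))
  have A2: "GF separable (lmin, rmin, lmax) z1 z2 z3 = Egf z1 z2 z3 / Dgf z2 z3" unfolding GF2 by (rule f2(1))
  have A3: "GF separable (rmin, rmax, lmin) z1 z2 z3 = Egf z1 z2 z3 / Dgf z2 z3" unfolding GF3 by (rule f3(1))
  have A4: "GF separable (rmax, rmin, lmax) z1 z2 z3 = Egf z1 z2 z3 / Dgf z2 z3" unfolding GF4 by (rule f4(1))
  have R1: "GF (\<lambda>p. separable p \<and> reducible_perm p) (lmax, rmax, lmin) z1 z2 z3 = Egf z1 z2 z3 - ?tp"
    unfolding GF1 red by (rule T1(1))
  have R3: "GF (\<lambda>p. separable p \<and> reducible_perm p) (rmin, rmax, lmin) z1 z2 z3 = Egf z1 z2 z3 - ?tp"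
    unfolding GF3 red by (rule T3(1))
  have I1: "GF (\<lambda>p. separable p \<and> irreducible_perm p) (lmax, rmax, lmin) z1 z2 z3 = ?I"
    unfolding GF1 irr i1 using f1(2) s1 by (simp add: algebra_simps)
  have I3: "GF (\<lambda>p. separable p \<and> irreducible_perm p) (rmin, rmax, lmin) z1 z2 z3 = ?I"
    unfolding GF3 irr i3 using f3(2) s3 by (simp add: algebra_simps)
  have I2: "GF (\<lambda>p. separable p \<and> irreducible_perm p) (lmin, rmin, lmax) z1 z2 z3 = Egf z1 z2 z3"
    unfolding GF2 irr i2 T2(1) by simp
  have I4: "GF (\<lambda>p. separable p \<and> irreducible_perm p) (rmax, rmin, lmax) z1 z2 z3 = Egf z1 z2 z3"
    unfolding GF4 irr i4 T4(1) by simp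
  have R2: "GF (\<lambda>p. separable p \<and> reducible_perm p) (lmin, rmin, lmax) z1 z2 z3 = - fps_const (z1 * z2 * z3) * fps_X + ?I"
  proof -
    have "Fp z3 1 z1 z2 = (Fs z3 1 z1 z2 - Fm z3 1 z1 z2) - ?tp" using s2 by simp
    also have "\<dots> = ?I - ?tp" using f2(2) by simp
    also have "\<dots> = - fps_const (z1 * z2 * z3) * fps_X + ?I" by algebra
    finally show ?thesis unfolding GF2 red .
  qed
  have R4: "GF (\<lambda>p. separable p \<and> reducible_perm p) (rmax, rmin, lmax) z1 z2 z3 = - fps_const (z1 * z2 * z3) * fps_X + ?I"
  proof -
    have "Fp z3 z1 1 z2 = (Fs z3 z1 1 z2 - Fm z3 z1 1 z2) - ?tp" using s4 by simp
    also have "\<dots> = ?I - ?tp" using f4(2) by simp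
    also have "\<dots> = - fps_const (z1 * z2 * z3) * fps_X + ?I" by algebra
    finally show ?thesis unfolding GF4 red .
  qed
  show ?thesis using Sclosed_eq[of z] A1 A2 A3 A4 R1 R2 R3 R4 I1 I2 I3 I4 by simp
qed

end
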